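(* Under the model of Theorem 2.2 ($\boldsymbol{X}_i=\mathbf{T}\boldsymbol{\epsilon}_i$, $\mathbf{T}=\mathbf{R}^{1/2}$, $\mathbf{R}=(r_{|i-j|})$ a positive definite Toeplitz correlation matrix with $r_k>0$, $\boldsymbol{\epsilon}_i$ with i.i.d. components of mean $0$, variance $1$, fourth moment $\kappa_4$), let $n\ge3$, $y_{k,(i,j)}=(x_{i,k}-x_{j,k})^2$, $\boldsymbol{Y}_t=(y_{t,(i,j)})_{1\le i<j\le n}\in\mathbb{R}^{n(n-1)/2}$ and $\boldsymbol{S}_p=p^{-1/2}\sum_{t=1}^p\boldsymbol{Y}_t$. Then $$\mathrm{Cov}(\boldsymbol{S}_p)=b_p\boldsymbol{\Sigma}_p,\qquad b_p=p^{-1}\left(8\|(\mathbf{T}^2)^{\odot2}\|+2(\kappa_4-3)\|(\mathbf{T}^{\odot2})^2\|\right),$$ where $\boldsymbol{\Sigma}_p$ is the matrix indexed by pairs $1\le i<j\le n$ with entries $1$ on the diagonal, $\rho_p$ for two distinct pairs sharing an index, and $0$ for disjoint pairs, with $$\rho_p=\frac{2\|(\mathbf{T}^2)^{\odot2}\|+(\kappa_4-3)\|(\mathbf{T}^{\odot2})^2\|}{8\|(\mathbf{T}^2)^{\odot2}\|+2(\kappa_4-3)\|(\mathbf{T}^{\odot2})^2\|}.$$ Moreover $\|(\mathbf{T}^2)^{\odot2}\|\ge\|(\mathbf{T}^{\odot2})^2\|$, $b_p\ge 2$, and if $\kappa_4\le5$ then $\rho_p\le 1/3$.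
   Context: For a matrix $\mathbf{A}$, $\|\mathbf{A}\|=\sum_{i}\sum_{j}|(\mathbf{A})_{ij}|$; $\odot$ is the Hadamard product and $\mathbf{A}^{\odot2}=\mathbf{A}\odot\mathbf{A}$. $\boldsymbol{X}_i=(x_{i,1},\dots,x_{i,p})^T$. *)

theory Defs
  imports "HOL-Probability.Probability"
begin

text \<open>Matrices of size p x p are functions nat => nat => real, indices 0..p-1.\<close>

definition mmul :: "nat \<Rightarrow> (nat \<Rightarrow> nat \<Rightarrow> real) \<Rightarrow> (nat \<Rightarrow> nat \<Rightarrow> real) \<Rightarrow> nat \<Rightarrow> nat \<Rightarrow> real" where
  "mmul p A B i j = (\<Sum>k<p. A i k * B k j)"

definition hadamard :: "(nat \<Rightarrow> nat \<Rightarrow> real) \<Rightarrow> (nat \<Rightarrow> nat \<Rightarrow> real) \<Rightarrow> nat \<Rightarrow> nat \<Rightarrow> real" where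
  "hadamard A B i j = A i j * B i j"

definition entry_norm :: "nat \<Rightarrow> (nat \<Rightarrow> nat \<Rightarrow> real) \<Rightarrow> real" where
  "entry_norm p A = (\<Sum>i<p. \<Sum>j<p. \<bar>A i j\<bar>)"

definition symmetric_mat :: "nat \<Rightarrow> (nat \<Rightarrow> nat \<Rightarrow> real) \<Rightarrow> bool" where
  "symmetric_mat p A \<longleftrightarrow> (\<forall>i<p. \<forall>j<p. A i j = A j i)"

definition pos_semidef_mat :: "nat \<Rightarrow> (nat \<Rightarrow> nat \<Rightarrow> real) \<Rightarrow> bool" where
  "pos_semidef_mat p A \<longleftrightarrow> symmetric_mat p A \<and>
     (\<forall>v::nat \<Rightarrow> real. (\<Sum>i<p. \<Sum>j<p. v i * A i j * v j) \<ge> 0)"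

definition pos_def_mat :: "nat \<Rightarrow> (nat \<Rightarrow> nat \<Rightarrow> real) \<Rightarrow> bool" where
  "pos_def_mat p A \<longleftrightarrow> symmetric_mat p A \<and>
     (\<forall>v::nat \<Rightarrow> real. (\<exists>i<p. v i \<noteq> 0) \<longrightarrow> (\<Sum>i<p. \<Sum>j<p. v i * A i j * v j) > 0)"

definition is_psd_sqrt :: "nat \<Rightarrow> (nat \<Rightarrow> nat \<Rightarrow> real) \<Rightarrow> (nat \<Rightarrow> nat \<Rightarrow> real) \<Rightarrow> bool" where
  "is_psd_sqrt p T R \<longleftrightarrow> pos_semidef_mat p T \<and> (\<forall>i<p. \<forall>j<p. mmul p T T i j = R i j)"

definition toeplitz :: "(nat \<Rightarrow> real) \<Rightarrow> nat \<Rightarrow> nat \<Rightarrow> real" where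
  "toeplitz r i j = r (if i \<le> j then j - i else i - j)"

definition (in prob_space) covariance :: "('a \<Rightarrow> real) \<Rightarrow> ('a \<Rightarrow> real) \<Rightarrow> real" where
  "covariance f g = expectation (\<lambda>\<omega>. f \<omega> * g \<omega>) - expectation f * expectation g"

text \<open>Data: X_i = T eps_i, samples i = 0..n-1, component k = 0..p-1.\<close>
definition obsX :: "nat \<Rightarrow> (nat \<Rightarrow> nat \<Rightarrow> real) \<Rightarrow> (nat \<Rightarrow> nat \<Rightarrow> 'a \<Rightarrow> real) \<Rightarrow> nat \<Rightarrow> nat \<Rightarrow> 'a \<Rightarrow> real" where
  "obsX p T eps i k \<omega> = (\<Sum>l<p. T k l * eps i l \<omega>)"

definition yvar :: "nat \<Rightarrow> (nat \<Rightarrow> nat \<Rightarrow> real) \<Rightarrow> (nat \<Rightarrow> nat \<Rightarrow> 'a \<Rightarrow> real) \<Rightarrow> nat \<Rightarrow> nat \<Rightarrow> nat \<Rightarrow> 'a \<Rightarrow> real" where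
  "yvar p T eps k i j \<omega> = (obsX p T eps i k \<omega> - obsX p T eps j k \<omega>)^2"

definition Svar :: "nat \<Rightarrow> (nat \<Rightarrow> nat \<Rightarrow> real) \<Rightarrow> (nat \<Rightarrow> nat \<Rightarrow> 'a \<Rightarrow> real) \<Rightarrow> nat \<Rightarrow> nat \<Rightarrow> 'a \<Rightarrow> real" where
  "Svar p T eps i j \<omega> = (1 / sqrt (real p)) * (\<Sum>t<p. yvar p T eps t i j \<omega>)"

definition Sigma_entry :: "real \<Rightarrow> nat \<times> nat \<Rightarrow> nat \<times> nat \<Rightarrow> real" where
  "Sigma_entry \<rho> a b = (if a = b then 1
      else if {fst a, snd a} \<inter> {fst b, snd b} \<noteq> {} then \<rho> else 0)"

end

theory Submission
  imports Defs
begin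


lemma pow_bound: fixes x :: real assumes "k \<le> 4" shows "\<bar>x ^ k\<bar> \<le> 1 + x ^ 4"
proof (cases "\<bar>x\<bar> \<le> 1")
  case True
  then have a: "\<bar>x ^ k\<bar> \<le> 1" by (simp add: power_le_one power_abs)
  have "x^4 \<ge> 0" by simp
  then show ?thesis using a by linarith
next
  case False
  then have "\<bar>x\<bar> ^ k \<le> \<bar>x\<bar> ^ 4" using assms by (intro power_increasing) auto
  then show ?thesis by (simp add: power_abs)
qed

lemma prod_list_count:
  assumes "finite J" "set xs \<subseteq> J"
  shows "prod_list (map f xs) = (\<Prod>x\<in>J. (f x :: 'b::comm_monoid_mult) ^ count_list xs x)"
  using assms(2)
proof (induction xs)
  case Nil then show ?case by simp
next
  case (Cons y xs)
  have "(\<Prod>x\<in>J. f x ^ count_list (y # xs) x) = (\<Prod>x\<in>J. f x ^ count_list xs x * (if x = y then f x else 1))"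
    by (intro prod.cong) (auto simp: power_commutes)
  also have "\<dots> = (\<Prod>x\<in>J. f x ^ count_list xs x) * f y"
    using Cons.prems assms(1) by (simp add: prod.distrib prod.delta)
  finally have e: "(\<Prod>x\<in>J. f x ^ count_list (y # xs) x) = (\<Prod>x\<in>J. f x ^ count_list xs x) * f y" .
  have "prod_list (map f (y # xs)) = f y * prod_list (map f xs)" by simp
  then show ?case using Cons e by (metis mult.commute insert_subset list.simps(15))
qed

lemma MI2: "(x::real) * (if P then y else 0) = (if P then x * y else 0)" by simp
lemma MI3: "(if P then y else 0) * (x::real) = (if P then y * x else 0)" by simp
lemma SI: "(\<Sum>x\<in>A. if P then f x else (0::real)) = (if P then sum f A else 0)" by simp
lemmas DS = MI2 MI3 SI sum.delta sum.delta'
lemma T1: fixes u v :: "'i \<Rightarrow> real" assumes "finite I" shows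
 "(\<Sum>a\<in>I. \<Sum>b\<in>I. \<Sum>c\<in>I. \<Sum>d\<in>I. u a * u b * v c * v d * ((if a = b then 1 else 0) * (if c = d then 1 else 0))) = (\<Sum>a\<in>I. u a^2) * (\<Sum>c\<in>I. v c^2)"
  using assms by (simp add: DS power2_eq_square sum_distrib_left sum_distrib_right mult.assoc) (subst sum.swap, simp add: mult_ac)
lemma T2: fixes u v :: "'i \<Rightarrow> real" assumes "finite I" shows
 "(\<Sum>a\<in>I. \<Sum>b\<in>I. \<Sum>c\<in>I. \<Sum>d\<in>I. u a * u b * v c * v d * ((if a = c then 1 else 0) * (if b = d then 1 else 0))) = (\<Sum>a\<in>I. u a * v a)^2"
  using assms by (simp add: DS power2_eq_square sum_distrib_left sum_distrib_right mult.assoc) (subst sum.swap, simp add: mult_ac)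
lemma T3: fixes u v :: "'i \<Rightarrow> real" assumes "finite I" shows
 "(\<Sum>a\<in>I. \<Sum>b\<in>I. \<Sum>c\<in>I. \<Sum>d\<in>I. u a * u b * v c * v d * ((if a = d then 1 else 0) * (if b = c then 1 else 0))) = (\<Sum>a\<in>I. u a * v a)^2"
  using assms by (simp add: DS power2_eq_square sum_distrib_left sum_distrib_right mult.assoc) (subst sum.swap, simp add: mult_ac)
lemma T4: fixes u v :: "'i \<Rightarrow> real" assumes "finite I" shows
 "(\<Sum>a\<in>I. \<Sum>b\<in>I. \<Sum>c\<in>I. \<Sum>d\<in>I. u a * u b * v c * v d * ((if a = b then 1 else 0) * (if a = c then 1 else 0) * (if a = d then 1 else 0))) = (\<Sum>a\<in>I. u a^2 * v a^2)"
  using assms by (simp add: DS power2_eq_square mult.assoc)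

context prob_space begin

lemma int_pow:
  fixes X :: "'a \<Rightarrow> real"
  assumes "X \<in> borel_measurable M" "integrable M (\<lambda>\<omega>. X \<omega> ^ 4)" "k \<le> 4"
  shows "integrable M (\<lambda>\<omega>. X \<omega> ^ k)"
proof -
  have 1: "integrable M (\<lambda>\<omega>. 1 + X \<omega> ^ 4)" using assms by simp
  have 2: "(\<lambda>\<omega>. X \<omega> ^ k) \<in> borel_measurable M" using assms by measurable
  have 3: "AE x in M. norm (X x ^ k) \<le> norm (1 + X x ^ 4)"
    using pow_bound[OF assms(3)] by (auto intro!: AE_I2 order_trans[OF _ abs_ge_self])
  show ?thesis by (rule Bochner_Integration.integrable_bound[OF 1 2 3])
qed

lemma E4:
  fixes X :: "'i \<Rightarrow> 'a \<Rightarrow> real"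
  assumes ind: "indep_vars (\<lambda>_. borel) X I"
    and meas: "\<forall>a\<in>I. X a \<in> borel_measurable M"
    and i4: "\<forall>a\<in>I. integrable M (\<lambda>\<omega>. X a \<omega> ^ 4)"
    and m1: "\<forall>a\<in>I. expectation (X a) = 0"
    and m2: "\<forall>a\<in>I. expectation (\<lambda>\<omega>. X a \<omega> ^ 2) = 1"
    and m4: "\<forall>a\<in>I. expectation (\<lambda>\<omega>. X a \<omega> ^ 4) = \<kappa>"
    and abcd: "a \<in> I" "b \<in> I" "c \<in> I" "d \<in> I"
  shows "integrable M (\<lambda>\<omega>. X a \<omega> * X b \<omega> * X c \<omega> * X d \<omega>)"
    and "expectation (\<lambda>\<omega>. X a \<omega> * X b \<omega> * X c \<omega> * X d \<omega>) =
      (if a = b then 1 else 0) * (if c = d then 1 else 0)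
      + (if a = c then 1 else 0) * (if b = d then 1 else 0)
      + (if a = d then 1 else 0) * (if b = c then 1 else 0)
      + (\<kappa> - 3) * ((if a = b then 1 else 0) * (if a = c then 1 else 0) * (if a = d then 1 else 0))"
proof -
  define cnt :: "'i \<Rightarrow> nat" where "cnt x = count_list [a,b,c,d] x" for x
  define J where "J = {a,b,c,d}"
  have JI: "J \<subseteq> I" using abcd by (auto simp: J_def)
  have cnt4: "cnt x \<le> 4" for x by (simp add: cnt_def)
  have prodeq: "X a \<omega> * X b \<omega> * X c \<omega> * X d \<omega> = (\<Prod>x\<in>J. X x \<omega> ^ cnt x)" for \<omega>
    using prod_list_count[of J "[a,b,c,d]" "\<lambda>x. X x \<omega>"] unfolding J_def cnt_def
    by (simp add: mult.assoc del: count_list.simps)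
  have indJ: "indep_vars (\<lambda>_. borel) (\<lambda>x \<omega>. X x \<omega> ^ cnt x) J"
    by (rule indep_vars_compose2[OF indep_vars_subset[OF ind JI]]) measurable
  have intJ: "\<And>x. x \<in> J \<Longrightarrow> integrable M (\<lambda>\<omega>. X x \<omega> ^ cnt x)"
  proof -
    fix x assume "x \<in> J"
    then have xI: "x \<in> I" using JI by blast
    show "integrable M (\<lambda>\<omega>. X x \<omega> ^ cnt x)"
      by (rule int_pow[OF bspec[OF meas xI] bspec[OF i4 xI] cnt4])
  qed
  have finJ: "finite J" by (simp add: J_def)
  show "integrable M (\<lambda>\<omega>. X a \<omega> * X b \<omega> * X c \<omega> * X d \<omega>)"
    unfolding prodeq by (rule indep_vars_integrable[OF finJ indJ intJ])
  define mom where "mom x k = expectation (\<lambda>\<omega>. X x \<omega> ^ k)" for x k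
  have "expectation (\<lambda>\<omega>. X a \<omega> * X b \<omega> * X c \<omega> * X d \<omega>) = (\<Prod>x\<in>J. mom x (cnt x))"
    unfolding prodeq mom_def by (rule indep_vars_lebesgue_integral[OF finJ indJ intJ])
  also have "\<dots> = (if a = b then 1 else 0) * (if c = d then 1 else 0)
      + (if a = c then 1 else 0) * (if b = d then 1 else 0)
      + (if a = d then 1 else 0) * (if b = c then 1 else 0)
      + (\<kappa> - 3) * ((if a = b then 1 else 0) * (if a = c then 1 else 0) * (if a = d then 1 else 0))"
  proof -
    have M1: "x \<in> I \<Longrightarrow> mom x (Suc 0) = 0" for x using m1 by (simp add: mom_def)
    have M2: "x \<in> I \<Longrightarrow> mom x (Suc (Suc 0)) = 1" for x using m2 by (simp add: mom_def numeral_2_eq_2)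
    have M4: "x \<in> I \<Longrightarrow> mom x (Suc (Suc (Suc (Suc 0)))) = \<kappa>" for x using m4 by (simp add: mom_def numeral_eq_Suc)
    note M = M1[OF abcd(1)] M1[OF abcd(2)] M1[OF abcd(3)] M1[OF abcd(4)]
      M2[OF abcd(1)] M2[OF abcd(2)] M2[OF abcd(3)] M2[OF abcd(4)]
      M4[OF abcd(1)] M4[OF abcd(2)] M4[OF abcd(3)] M4[OF abcd(4)]
    show ?thesis unfolding J_def cnt_def
      by (cases "a = b"; cases "a = c"; cases "a = d"; cases "b = c"; cases "b = d"; cases "c = d")
         (simp_all add: prod.insert_if M)
  qed
  finally show "expectation (\<lambda>\<omega>. X a \<omega> * X b \<omega> * X c \<omega> * X d \<omega>) =
      (if a = b then 1 else 0) * (if c = d then 1 else 0)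
      + (if a = c then 1 else 0) * (if b = d then 1 else 0)
      + (if a = d then 1 else 0) * (if b = c then 1 else 0)
      + (\<kappa> - 3) * ((if a = b then 1 else 0) * (if a = c then 1 else 0) * (if a = d then 1 else 0))" .
qed


lemma E2:
  fixes X :: "'i \<Rightarrow> 'a \<Rightarrow> real"
  assumes ind: "indep_vars (\<lambda>_. borel) X I"
    and meas: "\<forall>a\<in>I. X a \<in> borel_measurable M"
    and i4: "\<forall>a\<in>I. integrable M (\<lambda>\<omega>. X a \<omega> ^ 4)"
    and m1: "\<forall>a\<in>I. expectation (X a) = 0"
    and m2: "\<forall>a\<in>I. expectation (\<lambda>\<omega>. X a \<omega> ^ 2) = 1"
    and ab: "a \<in> I" "b \<in> I"
  shows "integrable M (\<lambda>\<omega>. X a \<omega> * X b \<omega>)"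
    and "expectation (\<lambda>\<omega>. X a \<omega> * X b \<omega>) = (if a = b then 1 else 0)"
proof -
  have i1: "integrable M (X x)" if "x \<in> I" for x
    using int_pow[of "X x" 1] meas i4 that by simp
  have "integrable M (\<lambda>\<omega>. X a \<omega> * X b \<omega>) \<and>
     expectation (\<lambda>\<omega>. X a \<omega> * X b \<omega>) = (if a = b then 1 else 0)"
  proof (cases "a = b")
    case True
    have "integrable M (\<lambda>\<omega>. X a \<omega> ^ 2)" using int_pow[of "X a" 2] meas i4 ab by simp
    then show ?thesis using True m2 ab by (simp add: power2_eq_square)
  next
    case False
    have indJ: "indep_vars (\<lambda>_. borel) X {a, b}"
      by (rule indep_vars_subset[OF ind]) (use ab in auto)
    have intJ: "\<And>x. x \<in> {a,b} \<Longrightarrow> integrable M (X x)" using i1 ab by auto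
    have pe: "(\<Prod>x\<in>{a,b}. X x \<omega>) = X a \<omega> * X b \<omega>" for \<omega> using False by simp
    have "integrable M (\<lambda>\<omega>. \<Prod>x\<in>{a,b}. X x \<omega>)"
      by (rule indep_vars_integrable[OF _ indJ intJ]) simp
    moreover have "expectation (\<lambda>\<omega>. \<Prod>x\<in>{a,b}. X x \<omega>) = (\<Prod>x\<in>{a,b}. expectation (X x))"
      by (rule indep_vars_lebesgue_integral[OF _ indJ intJ]) simp
    ultimately show ?thesis using False m1 ab unfolding pe by simp
  qed
  then show "integrable M (\<lambda>\<omega>. X a \<omega> * X b \<omega>)"
    and "expectation (\<lambda>\<omega>. X a \<omega> * X b \<omega>) = (if a = b then 1 else 0)" by auto
qed

lemma sq_expand: "(\<Sum>a\<in>I. u a * (x a::real))^2 = (\<Sum>a\<in>I. \<Sum>b\<in>I. u a * u b * (x a * x b))"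
  by (simp add: power2_eq_square sum_product mult_ac)

lemma sq2_expand: "(\<Sum>a\<in>I. u a * (x a::real))^2 * (\<Sum>a\<in>I. v a * x a)^2 =
   (\<Sum>a\<in>I. \<Sum>b\<in>I. \<Sum>c\<in>I. \<Sum>d\<in>I. u a * u b * v c * v d * (x a * x b * x c * x d))"
proof -
  have "(\<Sum>a\<in>I. u a * (x a::real))^2 * (\<Sum>a\<in>I. v a * x a)^2 =
     (\<Sum>a\<in>I. \<Sum>b\<in>I. u a * u b * (x a * x b)) * (\<Sum>c\<in>I. \<Sum>d\<in>I. v c * v d * (x c * x d))"
    by (simp only: sq_expand)
  also have "\<dots> = (\<Sum>a\<in>I. \<Sum>b\<in>I. \<Sum>c\<in>I. \<Sum>d\<in>I. (u a * u b * (x a * x b)) * (v c * v d * (x c * x d)))"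
    by (simp only: sum_distrib_right, simp only: sum_distrib_left)
  also have "\<dots> = (\<Sum>a\<in>I. \<Sum>b\<in>I. \<Sum>c\<in>I. \<Sum>d\<in>I. u a * u b * v c * v d * (x a * x b * x c * x d))"
    by (simp add: mult_ac)
  finally show ?thesis .
qed

end

locale mom4 = prob_space +
  fixes X :: "'i \<Rightarrow> 'a \<Rightarrow> real" and I :: "'i set" and \<kappa> :: real
  assumes ind: "indep_vars (\<lambda>_. borel) X I"
    and fin: "finite I"
    and meas: "\<forall>a\<in>I. X a \<in> borel_measurable M"
    and i4: "\<forall>a\<in>I. integrable M (\<lambda>\<omega>. X a \<omega> ^ 4)"
    and m1: "\<forall>a\<in>I. expectation (X a) = 0"
    and m2: "\<forall>a\<in>I. expectation (\<lambda>\<omega>. X a \<omega> ^ 2) = 1"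
    and m4: "\<forall>a\<in>I. expectation (\<lambda>\<omega>. X a \<omega> ^ 4) = \<kappa>"
begin

lemmas E2' = E2[OF ind meas i4 m1 m2]
lemmas E4' = E4[OF ind meas i4 m1 m2 m4]

lemma QF1:
  shows "integrable M (\<lambda>\<omega>. (\<Sum>a\<in>I. u a * X a \<omega>)^2)"
    and "expectation (\<lambda>\<omega>. (\<Sum>a\<in>I. u a * X a \<omega>)^2) = (\<Sum>a\<in>I. (u a)^2)"
proof -
  have ii: "\<And>a b. a \<in> I \<Longrightarrow> b \<in> I \<Longrightarrow> integrable M (\<lambda>\<omega>. u a * u b * (X a \<omega> * X b \<omega>))"
    using E2'(1) by simp
  show "integrable M (\<lambda>\<omega>. (\<Sum>a\<in>I. u a * X a \<omega>)^2)"
    unfolding sq_expand using ii by (intro Bochner_Integration.integrable_sum) auto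
  have "expectation (\<lambda>\<omega>. (\<Sum>a\<in>I. u a * X a \<omega>)^2)
     = (\<Sum>a\<in>I. \<Sum>b\<in>I. expectation (\<lambda>\<omega>. u a * u b * (X a \<omega> * X b \<omega>)))"
    unfolding sq_expand using ii
    by (subst Bochner_Integration.integral_sum) (auto intro!: Bochner_Integration.integrable_sum sum.cong Bochner_Integration.integral_sum)
  also have "\<dots> = (\<Sum>a\<in>I. \<Sum>b\<in>I. u a * u b * (if a = b then 1 else 0))"
    using E2'(2) by (intro sum.cong refl) simp
  also have "\<dots> = (\<Sum>a\<in>I. (u a)^2)"
    using fin by (simp add: DS power2_eq_square)
  finally show "expectation (\<lambda>\<omega>. (\<Sum>a\<in>I. u a * X a \<omega>)^2) = (\<Sum>a\<in>I. (u a)^2)" .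
qed

lemma QF2:
  shows "integrable M (\<lambda>\<omega>. (\<Sum>a\<in>I. u a * X a \<omega>)^2 * (\<Sum>a\<in>I. v a * X a \<omega>)^2)"
    and "expectation (\<lambda>\<omega>. (\<Sum>a\<in>I. u a * X a \<omega>)^2 * (\<Sum>a\<in>I. v a * X a \<omega>)^2)
       = (\<Sum>a\<in>I. (u a)^2) * (\<Sum>a\<in>I. (v a)^2) + 2 * (\<Sum>a\<in>I. u a * v a)^2
         + (\<kappa> - 3) * (\<Sum>a\<in>I. (u a)^2 * (v a)^2)"
proof -
  have ii: "\<And>a b c d. a \<in> I \<Longrightarrow> b \<in> I \<Longrightarrow> c \<in> I \<Longrightarrow> d \<in> I \<Longrightarrow>
     integrable M (\<lambda>\<omega>. u a * u b * v c * v d * (X a \<omega> * X b \<omega> * X c \<omega> * X d \<omega>))"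
    using E4'(1) by simp
  show "integrable M (\<lambda>\<omega>. (\<Sum>a\<in>I. u a * X a \<omega>)^2 * (\<Sum>a\<in>I. v a * X a \<omega>)^2)"
    unfolding sq2_expand using ii by (intro Bochner_Integration.integrable_sum) auto
  have "expectation (\<lambda>\<omega>. (\<Sum>a\<in>I. u a * X a \<omega>)^2 * (\<Sum>a\<in>I. v a * X a \<omega>)^2)
     = (\<Sum>a\<in>I. \<Sum>b\<in>I. \<Sum>c\<in>I. \<Sum>d\<in>I. expectation (\<lambda>\<omega>. u a * u b * v c * v d * (X a \<omega> * X b \<omega> * X c \<omega> * X d \<omega>)))"
    unfolding sq2_expand using ii
    by (subst Bochner_Integration.integral_sum, fastforce intro!: Bochner_Integration.integrable_sum)
       (intro sum.cong refl, subst Bochner_Integration.integral_sum, fastforce intro!: Bochner_Integration.integrable_sum,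
        intro sum.cong refl, subst Bochner_Integration.integral_sum, fastforce intro!: Bochner_Integration.integrable_sum,
        intro sum.cong refl, subst Bochner_Integration.integral_sum, fastforce intro!: Bochner_Integration.integrable_sum, simp)
  also have "\<dots> = (\<Sum>a\<in>I. \<Sum>b\<in>I. \<Sum>c\<in>I. \<Sum>d\<in>I. u a * u b * v c * v d *
      ((if a = b then 1 else 0) * (if c = d then 1 else 0)
      + (if a = c then 1 else 0) * (if b = d then 1 else 0)
      + (if a = d then 1 else 0) * (if b = c then 1 else 0)
      + (\<kappa> - 3) * ((if a = b then 1 else 0) * (if a = c then 1 else 0) * (if a = d then 1 else 0))))"
    using E4'(2) by (intro sum.cong refl) simp
  also have "\<dots> = (\<Sum>a\<in>I. \<Sum>b\<in>I. \<Sum>c\<in>I. \<Sum>d\<in>I. u a * u b * v c * v d * ((if a = b then 1 else 0) * (if c = d then 1 else 0)))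
     + (\<Sum>a\<in>I. \<Sum>b\<in>I. \<Sum>c\<in>I. \<Sum>d\<in>I. u a * u b * v c * v d * ((if a = c then 1 else 0) * (if b = d then 1 else 0)))
     + (\<Sum>a\<in>I. \<Sum>b\<in>I. \<Sum>c\<in>I. \<Sum>d\<in>I. u a * u b * v c * v d * ((if a = d then 1 else 0) * (if b = c then 1 else 0)))
     + (\<kappa> - 3) * (\<Sum>a\<in>I. \<Sum>b\<in>I. \<Sum>c\<in>I. \<Sum>d\<in>I. u a * u b * v c * v d * ((if a = b then 1 else 0) * (if a = c then 1 else 0) * (if a = d then 1 else 0)))"
    by (simp only: distrib_left sum.distrib sum_distrib_left mult.left_commute[of "\<kappa> - 3"])
  also have "\<dots> = (\<Sum>a\<in>I. (u a)^2) * (\<Sum>a\<in>I. (v a)^2) + 2 * (\<Sum>a\<in>I. u a * v a)^2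
         + (\<kappa> - 3) * (\<Sum>a\<in>I. (u a)^2 * (v a)^2)"
    by (simp only: T1[OF fin] T2[OF fin] T3[OF fin] T4[OF fin])
  finally show "expectation (\<lambda>\<omega>. (\<Sum>a\<in>I. u a * X a \<omega>)^2 * (\<Sum>a\<in>I. v a * X a \<omega>)^2)
       = (\<Sum>a\<in>I. (u a)^2) * (\<Sum>a\<in>I. (v a)^2) + 2 * (\<Sum>a\<in>I. u a * v a)^2
         + (\<kappa> - 3) * (\<Sum>a\<in>I. (u a)^2 * (v a)^2)" .
qed


lemma covQ:
  fixes U V :: "'t \<Rightarrow> 'i \<Rightarrow> real"
  assumes S: "finite S" and S': "finite S'"
  shows "expectation (\<lambda>\<omega>. (\<Sum>t\<in>S. (\<Sum>a\<in>I. U t a * X a \<omega>)^2) * (\<Sum>s\<in>S'. (\<Sum>a\<in>I. V s a * X a \<omega>)^2))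
     - expectation (\<lambda>\<omega>. \<Sum>t\<in>S. (\<Sum>a\<in>I. U t a * X a \<omega>)^2) * expectation (\<lambda>\<omega>. \<Sum>s\<in>S'. (\<Sum>a\<in>I. V s a * X a \<omega>)^2)
     = (\<Sum>t\<in>S. \<Sum>s\<in>S'. 2 * (\<Sum>a\<in>I. U t a * V s a)^2 + (\<kappa> - 3) * (\<Sum>a\<in>I. (U t a)^2 * (V s a)^2))"
proof -
  have e1: "expectation (\<lambda>\<omega>. (\<Sum>t\<in>S. (\<Sum>a\<in>I. U t a * X a \<omega>)^2)) = (\<Sum>t\<in>S. \<Sum>a\<in>I. (U t a)^2)"
    by (subst Bochner_Integration.integral_sum) (auto intro: QF1 simp: QF1(2))
  have e2: "expectation (\<lambda>\<omega>. (\<Sum>s\<in>S'. (\<Sum>a\<in>I. V s a * X a \<omega>)^2)) = (\<Sum>s\<in>S'. \<Sum>a\<in>I. (V s a)^2)"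
    by (subst Bochner_Integration.integral_sum) (auto intro: QF1 simp: QF1(2))
  have e3: "expectation (\<lambda>\<omega>. (\<Sum>t\<in>S. (\<Sum>a\<in>I. U t a * X a \<omega>)^2) * (\<Sum>s\<in>S'. (\<Sum>a\<in>I. V s a * X a \<omega>)^2))
     = (\<Sum>t\<in>S. \<Sum>s\<in>S'. (\<Sum>a\<in>I. (U t a)^2) * (\<Sum>a\<in>I. (V s a)^2) + 2 * (\<Sum>a\<in>I. U t a * V s a)^2
         + (\<kappa> - 3) * (\<Sum>a\<in>I. (U t a)^2 * (V s a)^2))"
    unfolding sum_product
    by (subst Bochner_Integration.integral_sum, fastforce intro!: Bochner_Integration.integrable_sum QF2)
       (intro sum.cong refl, subst Bochner_Integration.integral_sum, fastforce intro!: QF2, simp add: QF2(2) sum_product)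
  show ?thesis unfolding e1 e2 e3
    by (simp add: sum_product sum_subtractf[symmetric] algebra_simps)
qed

end

lemma sum_prod_sep: "(\<Sum>a\<in>A\<times>B. h (fst a) * (g (snd a)::real)) = (\<Sum>i\<in>A. h i) * (\<Sum>l\<in>B. g l)"
  by (simp add: sum.cartesian_product sum_product case_prod_beta)

definition ee :: "nat \<Rightarrow> nat \<Rightarrow> nat \<Rightarrow> real" where
  "ee i j x = (if x = i then 1 else 0) - (if x = j then 1 else 0)"

lemma lin_form:
  assumes "i < n" "j < n"
  shows "obsX p T eps i t \<omega> - obsX p T eps j t \<omega> =
    (\<Sum>a\<in>{..<n}\<times>{..<p}. (T t (snd a) * ee i j (fst a)) * (\<lambda>(i,k). eps i k) a \<omega>)"
proof -
  have "(\<Sum>a\<in>{..<n}\<times>{..<p}. (T t (snd a) * ee i j (fst a)) * (\<lambda>(i,k). eps i k) a \<omega>)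
     = (\<Sum>x<n. \<Sum>l<p. T t l * ee i j x * eps x l \<omega>)"
    by (simp add: sum.cartesian_product case_prod_beta)
  also have "\<dots> = (\<Sum>x<n. ee i j x * obsX p T eps x t \<omega>)"
    by (simp add: obsX_def sum_distrib_left mult_ac)
  also have "\<dots> = obsX p T eps i t \<omega> - obsX p T eps j t \<omega>"
    using assms by (simp add: ee_def left_diff_distrib sum_subtractf DS)
  finally show ?thesis by simp
qed

lemma ee_c:
  assumes "i < j" "j < n" "k < l" "l < n"
  shows "(\<Sum>x<n. ee i j x * ee k l x) = (if i = k then 1 else 0) - (if i = l then 1 else 0)
     - (if j = k then 1 else 0) + (if j = l then 1 else 0)"
  using assms by (simp add: ee_def algebra_simps sum.distrib sum_subtractf DS)

lemma ee_d:
  assumes "i < j" "j < n" "k < l" "l < n"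
  shows "(\<Sum>x<n. (ee i j x)^2 * (ee k l x)^2) = (if i = k then 1 else 0) + (if i = l then 1 else 0)
     + (if j = k then 1 else 0) + (if j = l then 1 else 0)"
proof -
  have "(ee i j x)^2 * (ee k l x)^2 = ((if x = i then 1 else 0) + (if x = j then 1 else 0)) *
     ((if x = k then 1 else 0) + (if x = l then 1 else 0))" for x
    using assms by (simp add: ee_def power2_eq_square)
  then show ?thesis using assms by (simp add: algebra_simps sum.distrib DS)
qed




theorem mainTheorem4:
  fixes M :: "'a measure" and eps :: "nat \<Rightarrow> nat \<Rightarrow> 'a \<Rightarrow> real"
    and n p :: nat and r :: "nat \<Rightarrow> real" and T :: "nat \<Rightarrow> nat \<Rightarrow> real" and \<kappa>4 :: real
  assumes M: "prob_space M"
    and n: "n \<ge> 3" and p: "p \<ge> 1"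
    and r0: "r 0 = 1" and rpos: "\<forall>k. 0 < k \<longrightarrow> r k > 0"
    and Rpd: "pos_def_mat p (toeplitz r)"
    and Tsqrt: "is_psd_sqrt p T (toeplitz r)"
    and meas: "\<forall>i<n. \<forall>k<p. eps i k \<in> borel_measurable M"
    and indep: "prob_space.indep_vars M (\<lambda>_. borel) (\<lambda>(i, k). eps i k) ({..<n} \<times> {..<p})"
    and ident: "\<forall>i<n. \<forall>k<p. distr M borel (eps i k) = distr M borel (eps 0 0)"
    and int4: "\<forall>i<n. \<forall>k<p. integrable M (\<lambda>\<omega>. (eps i k \<omega>)^4)"
    and mean0: "\<forall>i<n. \<forall>k<p. prob_space.expectation M (eps i k) = 0"
    and var1: "\<forall>i<n. \<forall>k<p. prob_space.expectation M (\<lambda>\<omega>. (eps i k \<omega>)^2) = 1"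
    and mom4: "\<forall>i<n. \<forall>k<p. prob_space.expectation M (\<lambda>\<omega>. (eps i k \<omega>)^4) = \<kappa>4"
  shows
    "let A = entry_norm p (hadamard (mmul p T T) (mmul p T T));
         B = entry_norm p (mmul p (hadamard T T) (hadamard T T));
         b = (8 * A + 2 * (\<kappa>4 - 3) * B) / real p;
         \<rho> = (2 * A + (\<kappa>4 - 3) * B) / (8 * A + 2 * (\<kappa>4 - 3) * B)
     in (\<forall>i j k l. i < j \<and> j < n \<and> k < l \<and> l < n \<longrightarrow>
           prob_space.covariance M (Svar p T eps i j) (Svar p T eps k l)
             = b * Sigma_entry \<rho> (i, j) (k, l))
        \<and> A \<ge> B \<and> b \<ge> 2 \<and> (\<kappa>4 \<le> 5 \<longrightarrow> \<rho> \<le> 1 / 3)"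
proof -
  interpret P: prob_space M by (rule M)
  define I where "I = {..<n} \<times> {..<p}"
  define X where "X = (\<lambda>(i::nat, k::nat). eps i k)"
  have Xa: "X a = eps (fst a) (snd a)" for a by (simp add: X_def case_prod_beta)
  interpret Q: mom4 M X I \<kappa>4
  proof unfold_locales
    show "P.indep_vars (\<lambda>_. borel) X I" using indep unfolding X_def I_def .
    show "finite I" by (simp add: I_def)
    show "\<forall>a\<in>I. X a \<in> borel_measurable M" using meas by (auto simp: I_def Xa)
    show "\<forall>a\<in>I. integrable M (\<lambda>\<omega>. X a \<omega> ^ 4)" using int4 by (auto simp: I_def Xa)
    show "\<forall>a\<in>I. P.expectation (X a) = 0" using mean0 by (auto simp: I_def Xa)
    show "\<forall>a\<in>I. P.expectation (\<lambda>\<omega>. X a \<omega> ^ 2) = 1" using var1 by (auto simp: I_def Xa)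
    show "\<forall>a\<in>I. P.expectation (\<lambda>\<omega>. X a \<omega> ^ 4) = \<kappa>4" using mom4 by (auto simp: I_def Xa)
  qed
  have Tsym: "\<And>a b. a < p \<Longrightarrow> b < p \<Longrightarrow> T a b = T b a"
    using Tsqrt by (auto simp: is_psd_sqrt_def pos_semidef_mat_def symmetric_mat_def)
  have TT: "\<And>a b. a < p \<Longrightarrow> b < p \<Longrightarrow> mmul p T T a b = toeplitz r a b"
    using Tsqrt by (simp add: is_psd_sqrt_def)
  define R where "R t s = (\<Sum>l<p. T t l * T s l)" for t s
  have RR: "mmul p T T t s = R t s" if "t < p" "s < p" for t s
    unfolding mmul_def R_def using that Tsym by (intro sum.cong) auto
  have Rdiag: "R t t = 1" if "t < p" for t
    using TT[OF that that] RR[OF that that] r0 by (simp add: toeplitz_def)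
  have colsum: "(\<Sum>s<p. (T s l)^2) = 1" if "l < p" for l
  proof -
    have "(\<Sum>s<p. (T s l)^2) = R l l" unfolding R_def power2_eq_square
      using that Tsym by (intro sum.cong) auto
    then show ?thesis using Rdiag[OF that] by simp
  qed
  define A where "A = entry_norm p (hadamard (mmul p T T) (mmul p T T))"
  define B where "B = entry_norm p (mmul p (hadamard T T) (hadamard T T))"
  have Aeq: "A = (\<Sum>t<p. \<Sum>s<p. (R t s)^2)"
    unfolding A_def entry_norm_def hadamard_def
    by (intro sum.cong refl) (simp add: RR power2_eq_square)
  have Beq: "B = (\<Sum>t<p. \<Sum>s<p. \<Sum>l<p. (T t l)^2 * (T s l)^2)"
    unfolding B_def entry_norm_def hadamard_def mmul_def
  proof (intro sum.cong refl)
    fix t s assume ts: "t \<in> {..<p}" "s \<in> {..<p}"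
    have "(\<Sum>k<p. T t k * T t k * (T k s * T k s)) = (\<Sum>l<p. (T t l)^2 * (T s l)^2)"
      using ts Tsym by (intro sum.cong refl) (auto simp: power2_eq_square)
    moreover have "(\<Sum>l<p. (T t l)^2 * (T s l)^2) \<ge> 0" by (intro sum_nonneg) simp
    ultimately show "\<bar>\<Sum>k<p. T t k * T t k * (T k s * T k s)\<bar> = (\<Sum>l<p. (T t l)^2 * (T s l)^2)"
      by simp
  qed
  have Bp: "B = real p"
  proof -
    have "B = (\<Sum>t<p. \<Sum>l<p. (T t l)^2 * (\<Sum>s<p. (T s l)^2))"
      unfolding Beq by (rule sum.cong[OF refl]) (simp only: sum_distrib_left, rule sum.swap)
    also have "\<dots> = (\<Sum>t<p. \<Sum>l<p. (T t l)^2)" by (simp add: colsum)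
    also have "\<dots> = (\<Sum>t<p. R t t)" unfolding R_def by (simp add: power2_eq_square)
    also have "\<dots> = real p" by (simp add: Rdiag)
    finally show ?thesis .
  qed
  have AgeB: "A \<ge> B"
  proof -
    have "(R t t)^2 \<le> (\<Sum>s<p. (R t s)^2)" if "t < p" for t
      using that by (intro member_le_sum) auto
    then have "(\<Sum>t<p. (R t t)^2) \<le> A" unfolding Aeq by (intro sum_mono) auto
    then show ?thesis using Bp Rdiag by simp
  qed
  have k1: "\<kappa>4 \<ge> 1"
  proof -
    have I0: "(0, 0) \<in> I" using n p by (simp add: I_def)
    have i2: "integrable M (\<lambda>\<omega>. X (0,0) \<omega> ^ 2)"
      using P.int_pow[of "X (0,0)" 2] Q.meas Q.i4 I0 by simp
    have i4: "integrable M (\<lambda>\<omega>. X (0,0) \<omega> ^ 4)" using Q.i4 I0 by simp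
    have "0 \<le> P.expectation (\<lambda>\<omega>. (X (0,0) \<omega> ^ 2 - 1)^2)" by simp
    also have "P.expectation (\<lambda>\<omega>. (X (0,0) \<omega> ^ 2 - 1)^2)
        = P.expectation (\<lambda>\<omega>. X (0,0) \<omega> ^ 4 - 2 * X (0,0) \<omega> ^ 2 + 1)"
      by (rule Bochner_Integration.integral_cong) (auto simp: power2_eq_square eval_nat_numeral algebra_simps)
    also have "\<dots> = \<kappa>4 - 2 + 1"
      using i2 i4 Q.m2 Q.m4 I0 by (simp add: P.prob_space)
    finally show ?thesis by simp
  qed
  have Ap: "A \<ge> real p" using AgeB Bp by simp
  have pp: "real p > 0" using p by simp
  have kp: "\<kappa>4 * real p \<ge> real p" using mult_right_mono[OF k1, of "real p"] by simp
  have D4: "8 * A + 2 * (\<kappa>4 - 3) * B \<ge> 4 * real p" using Ap Bp kp by (simp add: algebra_simps)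
  define W where "W t s = (\<Sum>l<p. (T t l)^2 * (T s l)^2)" for t s
  define U where "U i j t a = T t (snd a) * ee i j (fst a)" for i j t and a :: "nat \<times> nat"
  define Q where "Q i j \<omega> = (\<Sum>t<p. (\<Sum>a\<in>I. U i j t a * X a \<omega>)^2)" for i j \<omega>
  have SV: "Svar p T eps i j = (\<lambda>\<omega>. (1 / sqrt (real p)) * Q i j \<omega>)" if "i < n" "j < n" for i j
    by (rule ext) (simp add: Svar_def yvar_def lin_form[OF that] Q_def U_def I_def X_def)
  have cov: "P.covariance (Svar p T eps i j) (Svar p T eps k l)
     = (2 * (\<Sum>x<n. ee i j x * ee k l x)^2 * A + (\<kappa>4 - 3) * (\<Sum>x<n. (ee i j x)^2 * (ee k l x)^2) * B) / real p"
    if ij: "i < n" "j < n" and kl: "k < n" "l < n" for i j k l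
  proof -
    define c where "c = (\<Sum>x<n. ee i j x * ee k l x)"
    define d where "d = (\<Sum>x<n. (ee i j x)^2 * (ee k l x)^2)"
    define c0 where "c0 = 1 / sqrt (real p)"
    have c02: "c0^2 = 1 / real p" unfolding c0_def by (simp add: power_divide)
    have e: "(\<lambda>\<omega>. c0 * Q i j \<omega> * (c0 * Q k l \<omega>)) = (\<lambda>\<omega>. c0^2 * (Q i j \<omega> * Q k l \<omega>))"
      by (rule ext) (simp add: power2_eq_square mult_ac)
    have "P.covariance (Svar p T eps i j) (Svar p T eps k l)
      = c0^2 * (P.expectation (\<lambda>\<omega>. Q i j \<omega> * Q k l \<omega>) - P.expectation (Q i j) * P.expectation (Q k l))"
      unfolding SV[OF ij] SV[OF kl] P.covariance_def c0_def[symmetric] e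
      by (simp add: power2_eq_square algebra_simps)
    also have "P.expectation (\<lambda>\<omega>. Q i j \<omega> * Q k l \<omega>) - P.expectation (Q i j) * P.expectation (Q k l)
      = (\<Sum>t<p. \<Sum>s<p. 2 * (\<Sum>a\<in>I. U i j t a * U k l s a)^2 + (\<kappa>4 - 3) * (\<Sum>a\<in>I. (U i j t a)^2 * (U k l s a)^2))"
      using Q.covQ[of "{..<p}" "{..<p}" "U i j" "U k l"] unfolding Q_def by simp
    also have "\<dots> = (\<Sum>t<p. \<Sum>s<p. 2 * (c * R t s)^2 + (\<kappa>4 - 3) * (d * W t s))"
    proof (intro sum.cong refl)
      fix t s
      have "(\<Sum>a\<in>I. U i j t a * U k l s a) = (\<Sum>a\<in>{..<n}\<times>{..<p}. (ee i j (fst a) * ee k l (fst a)) * (T t (snd a) * T s (snd a)))"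
        unfolding I_def U_def by (simp add: mult_ac)
      also have "\<dots> = c * R t s" unfolding c_def R_def by (rule sum_prod_sep)
      finally have 1: "(\<Sum>a\<in>I. U i j t a * U k l s a) = c * R t s" .
      have "(\<Sum>a\<in>I. (U i j t a)^2 * (U k l s a)^2) = (\<Sum>a\<in>{..<n}\<times>{..<p}. ((ee i j (fst a))^2 * (ee k l (fst a))^2) * ((T t (snd a))^2 * (T s (snd a))^2))"
        unfolding I_def U_def by (simp add: mult_ac power_mult_distrib)
      also have "\<dots> = d * W t s" unfolding d_def W_def by (rule sum_prod_sep)
      finally have 2: "(\<Sum>a\<in>I. (U i j t a)^2 * (U k l s a)^2) = d * W t s" .
      show "2 * (\<Sum>a\<in>I. U i j t a * U k l s a)^2 + (\<kappa>4 - 3) * (\<Sum>a\<in>I. (U i j t a)^2 * (U k l s a)^2)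
          = 2 * (c * R t s)^2 + (\<kappa>4 - 3) * (d * W t s)" unfolding 1 2 ..
    qed
    also have "\<dots> = 2 * c^2 * (\<Sum>t<p. \<Sum>s<p. (R t s)^2) + (\<kappa>4 - 3) * d * (\<Sum>t<p. \<Sum>s<p. W t s)"
      by (simp add: power_mult_distrib sum.distrib sum_distrib_left mult_ac)
    finally show ?thesis unfolding c02 Aeq Beq W_def c_def d_def by (simp add: field_simps)
  qed
  have Dpos: "8 * A + 2 * (\<kappa>4 - 3) * B > 0" using D4 pp by linarith
  have main: "P.covariance (Svar p T eps i j) (Svar p T eps k l)
             = (8 * A + 2 * (\<kappa>4 - 3) * B) / real p * Sigma_entry ((2 * A + (\<kappa>4 - 3) * B) / (8 * A + 2 * (\<kappa>4 - 3) * B)) (i, j) (k, l)"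
    if h: "i < j" "j < n" "k < l" "l < n" for i j k l
  proof -
    have cv: "P.covariance (Svar p T eps i j) (Svar p T eps k l)
     = (2 * (\<Sum>x<n. ee i j x * ee k l x)^2 * A + (\<kappa>4 - 3) * (\<Sum>x<n. (ee i j x)^2 * (ee k l x)^2) * B) / real p"
      using cov h by simp
    note C = ee_c[OF h] ee_d[OF h]
    show ?thesis
    proof (cases "(i, j) = (k, l)")
      case True
      then show ?thesis using cv C h by (simp add: Sigma_entry_def)
    next
      case ne: False
      show ?thesis
      proof (cases "{i, j} \<inter> {k, l} \<noteq> {}")
        case True
        have "(\<Sum>x<n. ee i j x * ee k l x)^2 = 1 \<and> (\<Sum>x<n. (ee i j x)^2 * (ee k l x)^2) = 1"
          using True ne h unfolding C by auto
        then have cv1: "P.covariance (Svar p T eps i j) (Svar p T eps k l) = (2 * A + (\<kappa>4 - 3) * B) / real p"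
          using cv by simp
        have hl: "D \<noteq> 0 \<Longrightarrow> D / q * (x / D) = x / q" for D q x :: real by simp
        have "(8 * A + 2 * (\<kappa>4 - 3) * B) / real p * ((2 * A + (\<kappa>4 - 3) * B) / (8 * A + 2 * (\<kappa>4 - 3) * B))
          = (2 * A + (\<kappa>4 - 3) * B) / real p" (is "?l = _") using hl Dpos by simp
        moreover have se: "Sigma_entry x (i, j) (k, l) = x" for x using ne True unfolding Sigma_entry_def by auto
        ultimately show ?thesis unfolding se cv1 by simp
      next
        case False
        then have "(\<Sum>x<n. ee i j x * ee k l x) = 0 \<and> (\<Sum>x<n. (ee i j x)^2 * (ee k l x)^2) = 0"
          unfolding C by auto
        then show ?thesis using cv ne False by (simp add: Sigma_entry_def)
      qed
    qed
  qed
  have b2: "(8 * A + 2 * (\<kappa>4 - 3) * B) / real p \<ge> 2"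
    using D4 pp by (simp add: field_simps)
  have rho: "(2 * A + (\<kappa>4 - 3) * B) / (8 * A + 2 * (\<kappa>4 - 3) * B) \<le> 1 / 3" if k5: "\<kappa>4 \<le> 5"
  proof -
    have "(\<kappa>4 - 3) * real p \<le> 2 * real p" using mult_right_mono[of "\<kappa>4 - 3" 2 "real p"] k5 by simp
    then show ?thesis using Dpos Bp Ap by (simp add: field_simps)
  qed
  show ?thesis
    unfolding Let_def A_def[symmetric] B_def[symmetric]
    using main AgeB b2 rho by blast
qed


end
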